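(* Let $x,z\in\mathbb{R}^n$ be nonzero with $xx^T\neq zz^T$. Define $\theta\in[0,\pi/2]$ by $$\cos\theta=\max_{y\in\mathbb{R}^n,\ \mathbf{X}y\neq0}\frac{e^T\mathbf{X}y}{\|e\|\,\|\mathbf{X}y\|}.$$ Then $$\sin\theta=\frac{(\|z\|\sin\phi)^2}{\|e\|}=\frac{\sin^2\phi}{\sqrt{(\rho^2-1)^2+2\rho^2\sin^2\phi}}.$$
   Context: $\rho=\|x\|/\|z\|$ and $\phi=\arccos\big(x^Tz/(\|x\|\|z\|)\big)\in[0,\pi]$. $\mathrm{vec}$ is column-stacking vectorization; $e=\mathrm{vec}(xx^T-zz^T)\in\mathbb{R}^{n^2}$ (so $\|e\|=\|xx^T-zz^T\|_F$), and $\mathbf{X}\in\mathbb{R}^{n^2\times n}$ is the matrix with $\mathbf{X}u=\mathrm{vec}(xu^T+ux^T)$ for all $u\in\mathbb{R}^n$. *)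

theory Defs
  imports "HOL-Analysis.Analysis"
begin

definition outer :: "real^'n \<Rightarrow> real^'n \<Rightarrow> real^'n^'n" where
  "outer u v = (\<chi> i j. u $ i * v $ j)"

text \<open>The ordering of the n^2 coordinates (column stacking) is immaterial for
  inner products and norms, which are all the statement uses.\<close>
definition vecm :: "real^'n^'n \<Rightarrow> real^('n \<times> 'n)" where
  "vecm A = (\<chi> p. A $ fst p $ snd p)"

definition Xmap :: "real^'n \<Rightarrow> real^'n \<Rightarrow> real^('n \<times> 'n)" where
  "Xmap x u = vecm (outer x u + outer u x)"

end

theory Submission
  imports Defs
begin


abbreviation Ouv :: "real^'n \<Rightarrow> real^'n \<Rightarrow> real^('n\<times>'n)" where "Ouv a b \<equiv> vecm (outer a b)"

lemma vecm_nth[simp]: "vecm A $ p = A $ fst p $ snd p" by (simp add: vecm_def)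
lemma outer_nth[simp]: "outer u v $ i $ j = u $ i * v $ j" by (simp add: outer_def)

lemma vecm_add: "vecm (A + B) = vecm A + vecm B" by (simp add: vec_eq_iff)
lemma vecm_diff: "vecm (A - B) = vecm A - vecm B" by (simp add: vec_eq_iff)

lemma l1: "inner (Ouv a b) (Ouv c d) = (\<Sum>p\<in>UNIV. (a$fst p * b$snd p) * (c$fst p * d$snd p))"
  unfolding inner_vec_def by simp
lemma l2: "(\<Sum>p\<in>(UNIV::('n\<times>'n) set). (a$fst p * b$snd p) * (c$fst p * d$snd p)) = (\<Sum>i\<in>UNIV. \<Sum>j\<in>UNIV. ((a::real^'n)$i * b$j) * (c$i * d$j))"
  unfolding UNIV_Times_UNIV[symmetric] sum.cartesian_product by (simp add: case_prod_beta)
lemma l3: "(\<Sum>i\<in>UNIV. \<Sum>j\<in>UNIV. ((a::real^'n)$i * b$j) * (c$i * d$j)) = (\<Sum>i\<in>UNIV. a$i * c$i) * (\<Sum>j\<in>UNIV. b$j * d$j)"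
  unfolding sum_product by (intro sum.cong refl) (simp add: algebra_simps)
lemma l4: "(\<Sum>i\<in>UNIV. a$i * c$i) * (\<Sum>j\<in>UNIV. b$j * d$j) = inner a c * inner (b::real^'n) d"
  by (simp add: inner_vec_def)

lemma inner_OO: "inner (Ouv a b) (Ouv c d) = inner a c * inner b d"
  unfolding l1 l2 l3 l4 by (rule refl)

lemma Xmap_OO: "Xmap x y = Ouv x y + Ouv y x" by (simp add: Xmap_def vecm_add)

lemma norm_Xmap_sq: "(norm (Xmap x y))^2 = 2 * (inner x x * inner y y) + 2 * (inner x y)^2"
  unfolding power2_norm_eq_inner by (simp add: Xmap_OO inner_add_left inner_add_right inner_OO inner_commute power2_eq_square)


theorem mainTheorem6:
  fixes x z :: "real^'n"
  assumes "x \<noteq> 0" and "z \<noteq> 0" and "outer x x \<noteq> outer z z"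
  defines "e \<equiv> vecm (outer x x - outer z z)"
      and "\<rho> \<equiv> norm x / norm z"
      and "\<phi> \<equiv> arccos (inner x z / (norm x * norm z))"
      and "S \<equiv> {inner (vecm (outer x x - outer z z)) (Xmap x y) / (norm (vecm (outer x x - outer z z)) * norm (Xmap x y)) | y. Xmap x y \<noteq> 0}"
  shows "(\<exists>\<theta>\<in>{0..pi/2}. cos \<theta> \<in> S \<and> (\<forall>s\<in>S. s \<le> cos \<theta>)) \<and>
         (\<forall>\<theta>\<in>{0..pi/2}. cos \<theta> \<in> S \<and> (\<forall>s\<in>S. s \<le> cos \<theta>) \<longrightarrow>
             sin \<theta> = (norm z * sin \<phi>)^2 / norm e \<and>
             (norm z * sin \<phi>)^2 / norm e
               = (sin \<phi>)^2 / sqrt ((\<rho>^2 - 1)^2 + 2 * \<rho>^2 * (sin \<phi>)^2))"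
proof -
  have xx: "inner x x > 0" using assms(1) by simp
  have nx: "norm x > 0" "norm z > 0" using assms(1,2) by auto
  define \<alpha> where "\<alpha> = inner x z / inner x x"
  define w where "w = z - \<alpha> *\<^sub>R x"
  have xw: "inner x w = 0" using xx by (simp add: w_def \<alpha>_def inner_diff_right)
  define y0 where "y0 = ((1 - \<alpha>^2)/2) *\<^sub>R x - \<alpha> *\<^sub>R w"
  define r where "r = Ouv w w"
  have eS: "S = {inner e (Xmap x y) / (norm e * norm (Xmap x y)) | y. Xmap x y \<noteq> 0}"
    by (simp add: S_def e_def)
  have eq: "e + r = Xmap x y0"
  proof -
    have zc: "\<And>i. z $ i = \<alpha> * x $ i + w $ i" by (simp add: w_def)
    have yc: "\<And>k. y0 $ k = (1 - \<alpha>^2)/2 * x $ k - \<alpha> * w $ k" by (simp add: y0_def)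
    have "(e + r) $ (i, j) = Xmap x y0 $ (i, j)" for i j
    proof -
      have "(e + r) $ (i, j) = x$i*x$j - z$i*z$j + w$i*w$j" by (simp add: e_def r_def)
      moreover have "Xmap x y0 $ (i, j) = x$i*y0$j + y0$i*x$j" by (simp add: Xmap_def)
      ultimately show ?thesis unfolding zc yc by (simp add: power2_eq_square algebra_simps divide_simps)
    qed
    then show ?thesis unfolding vec_eq_iff by (metis prod.collapse)
  qed
  have orth: "\<And>y. inner r (Xmap x y) = 0"
    using xw by (simp add: r_def Xmap_OO inner_add_right inner_OO inner_commute)
  have y0nz: "y0 \<noteq> 0"
  proof
    assume h: "y0 = 0"
    have "inner x y0 = ((1 - \<alpha>^2)/2) * inner x x" by (simp add: y0_def inner_diff_right xw)
    hence a1: "\<alpha>^2 = 1" using h xx by simp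
    hence "\<alpha> \<noteq> 0" by auto
    hence "w = 0" using h a1 by (simp add: y0_def)
    hence "z = \<alpha> *\<^sub>R x" by (simp add: w_def)
    hence "outer z z = outer x x" using a1 unfolding vec_eq_iff
      by (auto simp: power2_eq_square algebra_simps)
    thus False using assms(3) by simp
  qed
  have X0: "Xmap x y0 \<noteq> 0"
  proof
    assume "Xmap x y0 = 0"
    hence "2 * (inner x x * inner y0 y0) + 2 * (inner y0 x)^2 = 0" 
      using norm_Xmap_sq[of x y0] by (simp add: inner_commute)
    moreover have "inner y0 y0 > 0" using y0nz by simp
    moreover have "0 < 2 * (inner x x * inner y0 y0) + 2 * (inner y0 x)^2"
      using xx \<open>inner y0 y0 > 0\<close> by (intro add_pos_nonneg) auto
    ultimately show False by linarith
  qed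
  define N where "N = norm (Xmap x y0)"
  have Npos: "N > 0" using X0 by (simp add: N_def)
  have enorm: "(norm e)^2 = N^2 + (norm r)^2"
  proof -
    have "e = Xmap x y0 - r" using eq by (simp add: algebra_simps)
    thus ?thesis using orth[of y0]
      by (simp add: N_def power2_norm_eq_inner inner_diff_left inner_diff_right inner_commute)
  qed
  have epos: "norm e > 0"
  proof -
    have "(norm e)^2 > 0" unfolding enorm using Npos by (intro add_pos_nonneg) auto
    thus ?thesis by simp
  qed
  define c0 where "c0 = N / norm e"
  have Ne: "N \<le> norm e"
    by (rule power2_le_imp_le) (use enorm in auto)
  have c0r: "0 < c0" "c0 \<le> 1" using Npos epos Ne by (auto simp: c0_def)
  have c0S: "c0 \<in> S"
  proof -
    have "inner e (Xmap x y0) = N^2"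
    proof -
      have "e = Xmap x y0 - r" using eq by (simp add: algebra_simps)
      hence "inner e (Xmap x y0) = inner (Xmap x y0) (Xmap x y0) - inner r (Xmap x y0)"
        by (simp add: inner_diff_left)
      thus ?thesis using orth[of y0] by (simp add: N_def power2_norm_eq_inner)
    qed
    hence "c0 = inner e (Xmap x y0) / (norm e * norm (Xmap x y0))"
      using Npos by (simp add: c0_def N_def power2_eq_square)
    thus ?thesis using X0 eS by blast
  qed
  have c0max: "\<forall>s\<in>S. s \<le> c0"
  proof
    fix s assume "s \<in> S"
    then obtain y where y: "Xmap x y \<noteq> 0" "s = inner e (Xmap x y) / (norm e * norm (Xmap x y))"
      using eS by blast
    have "e = Xmap x y0 - r" using eq by (simp add: algebra_simps)
    hence "inner e (Xmap x y) = inner (Xmap x y0) (Xmap x y)"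
      using orth[of y] by (simp add: inner_diff_left)
    also have "\<dots> \<le> N * norm (Xmap x y)" unfolding N_def by (rule norm_cauchy_schwarz)
    finally have "inner e (Xmap x y) \<le> N * norm (Xmap x y)" .
    moreover have "norm (Xmap x y) > 0" using y by simp
    ultimately show "s \<le> c0" using epos
      by (simp add: y(2) c0_def divide_simps mult_ac)
  qed
  define c where "c = inner x z / (norm x * norm z)"
  have cb: "\<bar>c\<bar> \<le> 1" using Cauchy_Schwarz_ineq2[of x z] nx
    by (simp add: c_def abs_div)
  have sphi: "sin \<phi> = sqrt (1 - c^2)" unfolding \<phi>_def c_def[symmetric]
    using cb by (simp add: sin_arccos abs_le_iff)
  have c2: "c^2 \<le> 1" using cb by (simp add: abs_square_le_1)
  have sphi2: "(sin \<phi>)^2 = 1 - c^2" using sphi c2 by simp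
  have nw: "(norm w)^2 = (norm z * sin \<phi>)^2"
  proof -
    have "(norm w)^2 = inner z z - 2 * (\<alpha> * inner x z) + \<alpha>^2 * inner x x"
      unfolding power2_norm_eq_inner w_def
      by (simp only: inner_diff_left inner_diff_right inner_scaleR_left inner_scaleR_right
          inner_commute[of z x] power2_eq_square) algebra
    moreover have q: "\<alpha> * inner x z = (inner x z)^2 / inner x x"
      by (simp add: \<alpha>_def power2_eq_square)
    moreover have "\<alpha>^2 * inner x x = (inner x z)^2 / inner x x"
    proof -
      have ax: "\<alpha> * inner x x = inner x z" using xx by (simp add: \<alpha>_def)
      have "\<alpha>^2 * inner x x = \<alpha> * (\<alpha> * inner x x)" by (simp add: power2_eq_square)
      also have "\<dots> = \<alpha> * inner x z" by (simp only: ax)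
      finally show ?thesis using q by simp
    qed
    ultimately have 1: "(norm w)^2 = inner z z - (inner x z)^2 / inner x x" by linarith
    have 2: "(norm z * sin \<phi>)^2 = (norm z)^2 * (1 - c^2)"
      by (simp add: power_mult_distrib sphi2)
    have 3: "c^2 = (inner x z)^2 / ((norm x)^2 * (norm z)^2)"
      by (simp add: c_def power_divide power_mult_distrib)
    have zz: "inner z z > 0" using assms(2) by simp
    show ?thesis using xx zz
      by (simp only: 1 2 3, simp only: power2_norm_eq_inner, simp add: field_simps)
  qed
  have nr: "norm r = (norm w)^2"
  proof -
    have rr: "inner r r = (inner w w)^2" by (simp add: r_def inner_OO power2_eq_square)
    have "norm r = sqrt (inner r r)" by (rule norm_eq_sqrt_inner)
    also have "\<dots> = inner w w" unfolding rr by simp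
    also have "\<dots> = (norm w)^2" by (rule power2_norm_eq_inner[symmetric])
    finally show ?thesis .
  qed
  have part2: "(norm z * sin \<phi>)^2 / norm e
               = (sin \<phi>)^2 / sqrt ((\<rho>^2 - 1)^2 + 2 * \<rho>^2 * (sin \<phi>)^2)"
  proof -
    define a where "a = (norm x)^2"
    define b where "b = (norm z)^2"
    define s2 where "s2 = (sin \<phi>)^2"
    have bpos: "b > 0" using nx by (simp add: b_def)
    have s2c: "s2 = 1 - c^2" using sphi2 by (simp add: s2_def)
    have s2n: "s2 \<ge> 0" by (simp add: s2_def)
    have e2: "(norm e)^2 = a^2 + b^2 - 2 * (inner x z)^2"
      unfolding a_def b_def power2_norm_eq_inner
      by (simp add: e_def vecm_diff inner_diff_left inner_diff_right inner_OO inner_commute power2_eq_square)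
    have ip: "(inner x z)^2 = a * b * (1 - s2)"
      using nx by (simp add: s2c c_def a_def b_def power_divide power_mult_distrib)
    define D where "D = (\<rho>^2 - 1)^2 + 2 * \<rho>^2 * s2"
    have rho2: "\<rho>^2 = a / b" by (simp add: \<rho>_def a_def b_def power_divide)
    have Dn: "D \<ge> 0" unfolding D_def using s2n by simp
    have bD: "b^2 * D = (a - b)^2 + 2 * a * b * s2"
      unfolding D_def rho2 using bpos by (simp add: field_simps power2_eq_square)
    have "(norm e)^2 = b^2 * D" unfolding bD e2 ip by (simp add: power2_eq_square algebra_simps)
    hence "sqrt ((norm e)^2) = sqrt (b^2) * sqrt D" by (simp add: real_sqrt_mult)
    hence ne: "norm e = b * sqrt D" using bpos by simp
    have lhs: "(norm z * sin \<phi>)^2 = b * s2" by (simp add: power_mult_distrib b_def s2_def)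
    have "(norm z * sin \<phi>)^2 / norm e = s2 / sqrt D" unfolding lhs ne using bpos by simp
    thus ?thesis by (simp add: D_def s2_def)
  qed
  have A: "\<exists>\<theta>\<in>{0..pi/2}. cos \<theta> \<in> S \<and> (\<forall>s\<in>S. s \<le> cos \<theta>)"
  proof (rule bexI[of _ "arccos c0"])
    have "cos (arccos c0) = c0" using c0r by (intro cos_arccos) auto
    thus "cos (arccos c0) \<in> S \<and> (\<forall>s\<in>S. s \<le> cos (arccos c0))" using c0S c0max by simp
    have "0 \<le> arccos c0" using c0r by (intro arccos_lbound) auto
    moreover have "arccos c0 \<le> pi/2" using c0r by (intro arccos_le_pi2) auto
    ultimately show "arccos c0 \<in> {0..pi/2}" by simp
  qed
  have B: "sin \<theta> = (norm z * sin \<phi>)^2 / norm e"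
    if th: "\<theta> \<in> {0..pi/2}" and h: "cos \<theta> \<in> S \<and> (\<forall>s\<in>S. s \<le> cos \<theta>)" for \<theta>
  proof -
    have "c0 \<le> cos \<theta>" using h c0S by blast
    moreover have "cos \<theta> \<le> c0" using h c0max by blast
    ultimately have ct: "cos \<theta> = c0" by linarith
    have sn: "sin \<theta> \<ge> 0" using th by (intro sin_ge_zero) auto
    have "(sin \<theta>)^2 = 1 - (cos \<theta>)^2" using sin_cos_squared_add[of \<theta>] by linarith
    also have "\<dots> = 1 - c0^2" using ct by simp
    also have "\<dots> = ((norm e)^2 - N^2) / (norm e)^2"
      using epos by (simp add: c0_def power_divide field_simps)
    also have "\<dots> = (norm r)^2 / (norm e)^2" using enorm by simp
    also have "\<dots> = (norm r / norm e)^2" by (simp add: power_divide)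
    finally have "(sin \<theta>)^2 = (norm r / norm e)^2" .
    hence "sin \<theta> = norm r / norm e"
      using sn epos by (subst (asm) power2_eq_iff_nonneg) auto
    thus ?thesis using nr nw by simp
  qed
  show ?thesis using A B part2 by blast
qed

end
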